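(* Let $\Phi$ be a natural rational associator. Then $I_\Phi(\tilde K)\in\mathrm{Chord}_{nat}$ for every knot diagram $\tilde K$ (together with its decomposition into elementary pieces).
   Context: $b_p(n)=\big[\frac{p}{(p-1)^2}n-\frac1{p-1}\big]$ ($[\cdot]$ integer part) and $D(n)=\prod_{p\text{ prime},p\le n+1}p^{b_p(n)}$. A rational associator $\Phi\in\mathrm{Assoc}_1(\mathbb{Q})$ (group-like $\Phi\in\mathbb{Q}\langle\!\langle x,y\rangle\!\rangle$ with $\Phi(x,y)=\Phi(y,x)^{-1}$, $e^{x/2}\Phi(z,x)e^{z/2}\Phi(y,z)e^{y/2}\Phi(x,y)=1$ for $x+y+z=0$, and the pentagon $\Phi(t_{1,2},t_{2,3}+t_{2,4})\Phi(t_{1,3}+t_{2,3},t_{3,4})=\Phi(t_{2,3},t_{3,4})\Phi(t_{1,2}+t_{1,3},t_{2,4}+t_{3,4})\Phi(t_{1,2},t_{2,3})$ in the completed group of infinitesimal braids on 4 strands) is natural if $\Phi\in1+\sum_{n\ge1}p^{-b_p(n)}\mathbb{Z}_p\langle x,y\rangle^n$ for every prime $p$. Chord diagrams: oriented circle with disjoint pairs of points joined by chords, up to orientation-preserving diffeomorphism; $\mathrm{Chord}(\mathbb{Q})$ is the completed span modulo the 4T relation and the one-term relation (diagrams with an isolated chord, whose endpoints are adjacent on the circle, vanish), graded by number of chords, with connected-sum product; $\mathrm{Chord}_n(\mathbb{Z})$ the integral lattice in degree $n$; $\mathrm{Chord}_{nat}=\sum_{n\ge0}D(n)^{-1}\mathrm{Chord}_n(\mathbb{Z})$.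 $I_\Phi(\tilde K)$: for a knot diagram $\tilde K$ in general position (transversal simple crossings, height Morse, distinct critical and crossing heights) decomposed into elementary pieces — maxima, minima, positive/negative crossings, and three-strand re-bracketing pieces $c,c^{-1}$ — decorate crossings with $\exp(\pm t/2)$ ($t$ the horizontal chord between the two strands), $c$ with $\Phi(t_{1,2},t_{2,3})$ and $c^{-1}$ with $\Phi(t_{1,2},t_{2,3})^{-1}$ ($t_{i,j}$ the horizontal chord between strands $i,j$), maxima/minima with nothing, with a sign $(-1)^k$ when the orientation of a strand carrying $k$ chord endpoints is reversed; the resulting element of $\mathrm{Chord}(\mathbb{Q})$ is $I_\Phi(\tilde K)$. *)

theory Defs
  imports Complex_Main "HOL-Computational_Algebra.Primes"
begin

section \<open>Noncommutative formal power series over an alphabet 'a (coefficients in Q)\<close>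

type_synonym 'a ser = "'a list \<Rightarrow> rat"

definition ser_one :: "'a ser" where
  "ser_one w = (if w = [] then 1 else 0)"

definition ser_letter :: "'a \<Rightarrow> 'a ser" where
  "ser_letter a w = (if w = [a] then 1 else 0)"

definition ser_word :: "'a list \<Rightarrow> 'a ser" where
  "ser_word u w = (if w = u then 1 else 0)"

definition ser_add :: "'a ser \<Rightarrow> 'a ser \<Rightarrow> 'a ser" where
  "ser_add F G w = F w + G w"

definition ser_diff :: "'a ser \<Rightarrow> 'a ser \<Rightarrow> 'a ser" where
  "ser_diff F G w = F w - G w"

definition ser_scale :: "rat \<Rightarrow> 'a ser \<Rightarrow> 'a ser" where
  "ser_scale c F w = c * F w"

definition ser_mult :: "'a ser \<Rightarrow> 'a ser \<Rightarrow> 'a ser" where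
  "ser_mult F G w = (\<Sum>k\<le>length w. F (take k w) * G (drop k w))"

definition ser_prod :: "'a ser list \<Rightarrow> 'a ser" where
  "ser_prod Fs = foldr ser_mult Fs ser_one"

text \<open>multiplicative inverse (for series with invertible constant term)\<close>
definition ser_inv :: "'a ser \<Rightarrow> 'a ser" where
  "ser_inv F = (THE G. ser_mult F G = ser_one)"

text \<open>exponential of a series without constant term\<close>
definition ser_exp :: "'a ser \<Rightarrow> 'a ser" where
  "ser_exp A w = (\<Sum>k\<le>length w. ser_prod (replicate k A) w / fact k)"

datatype xy = X | Y

text \<open>substitution Phi(A,B) of series A, B without constant term into Phi in Q<<x,y>>\<close>
definition subst :: "xy ser \<Rightarrow> 'a ser \<Rightarrow> 'a ser \<Rightarrow> 'a ser" where
  "subst Phi A B w = (\<Sum>u\<in>{u::xy list. length u \<le> length w}.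
      Phi u * ser_prod (map (\<lambda>c. case c of X \<Rightarrow> A | Y \<Rightarrow> B) u) w)"

definition qspan :: "('b \<Rightarrow> rat) set \<Rightarrow> ('b \<Rightarrow> rat) set" where
  "qspan R = {v. \<exists>S c. finite S \<and> S \<subseteq> R \<and> v = (\<lambda>g. \<Sum>r\<in>S. c r * r g)}"

section \<open>Rational associators\<close>

text \<open>group-like: coefficients form a shuffle character (Delta Phi = Phi (x) Phi, eps Phi = 1)\<close>
fun shuf :: "'a list \<Rightarrow> 'a list \<Rightarrow> 'a list list" where
  "shuf [] v = [v]"
| "shuf u [] = [u]"
| "shuf (a # u) (b # v) = map ((#) a) (shuf u (b # v)) @ map ((#) b) (shuf (a # u) v)"

definition group_like :: "xy ser \<Rightarrow> bool" where
  "group_like Phi \<longleftrightarrow> Phi [] = 1 \<and>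
     (\<forall>u v. Phi u * Phi v = sum_list (map Phi (shuf u v)))"

definition hom_part :: "nat \<Rightarrow> 'a ser \<Rightarrow> 'a ser" where
  "hom_part n F w = (if length w = n then F w else 0)"

text \<open>E lies in the closed two-sided ideal of the completed free algebra on Gens
  generated by the homogeneous elements Rels\<close>
definition in_closed_ideal :: "'a set \<Rightarrow> 'a ser set \<Rightarrow> 'a ser \<Rightarrow> bool" where
  "in_closed_ideal Gens Rels E \<longleftrightarrow> (\<forall>n. hom_part n E \<in>
     qspan {ser_mult (ser_mult (ser_word u) r) (ser_word v) | u r v.
              set u \<subseteq> Gens \<and> set v \<subseteq> Gens \<and> r \<in> Rels \<and> length u + length v + 2 = n})"

text \<open>infinitesimal braids on 4 strands: generators t_ij = t_ji, 1 <= i < j <= 4\<close>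
definition tt :: "nat \<Rightarrow> nat \<Rightarrow> (nat \<times> nat) ser" where
  "tt i j = ser_letter (min i j, max i j)"

definition gens4 :: "(nat \<times> nat) set" where
  "gens4 = {(i, j). 1 \<le> i \<and> i < j \<and> j \<le> 4}"

definition comm :: "'a ser \<Rightarrow> 'a ser \<Rightarrow> 'a ser" where
  "comm A B = ser_diff (ser_mult A B) (ser_mult B A)"

definition rels4 :: "(nat \<times> nat) ser set" where
  "rels4 = {comm (tt i j) (tt k l) | i j k l.
              {i, j, k, l} \<subseteq> {1..4} \<and> card {i, j, k, l} = 4}
         \<union> {comm (tt i j) (ser_add (tt i k) (tt j k)) | i j k.
              {i, j, k} \<subseteq> {1..4} \<and> card {i, j, k} = 3}"

definition eq_A4 :: "(nat \<times> nat) ser \<Rightarrow> (nat \<times> nat) ser \<Rightarrow> bool" where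
  "eq_A4 F G \<longleftrightarrow> in_closed_ideal gens4 rels4 (ser_diff F G)"

definition is_associator1 :: "xy ser \<Rightarrow> bool" where
  "is_associator1 Phi \<longleftrightarrow>
     group_like Phi \<and>
     Phi = ser_inv (subst Phi (ser_letter Y) (ser_letter X)) \<and>
     (let x = ser_letter X; y = ser_letter Y;
          z = ser_scale (-1) (ser_add (ser_letter X) (ser_letter Y)) in
       ser_prod [ser_exp (ser_scale (1/2) x), subst Phi z x,
                 ser_exp (ser_scale (1/2) z), subst Phi y z,
                 ser_exp (ser_scale (1/2) y), subst Phi x y] = ser_one) \<and>
     eq_A4
       (ser_prod [subst Phi (tt 1 2) (ser_add (tt 2 3) (tt 2 4)),
                  subst Phi (ser_add (tt 1 3) (tt 2 3)) (tt 3 4)])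
       (ser_prod [subst Phi (tt 2 3) (tt 3 4),
                  subst Phi (ser_add (tt 1 2) (tt 1 3)) (ser_add (tt 2 4) (tt 3 4)),
                  subst Phi (tt 1 2) (tt 2 3)])"

section \<open>Naturality\<close>

definition bexp :: "nat \<Rightarrow> nat \<Rightarrow> int" where
  "bexp p n = \<lfloor>(of_nat p * of_nat n / (of_nat p - 1)^2 - 1 / (of_nat p - 1)) :: rat\<rfloor>"

definition Dn :: "nat \<Rightarrow> nat" where
  "Dn n = (\<Prod>p\<in>{p. prime p \<and> p \<le> n + 1}. p ^ nat (bexp p n))"

definition in_Zp :: "nat \<Rightarrow> rat \<Rightarrow> bool" where
  "in_Zp p q \<longleftrightarrow> (\<exists>a b::int. b \<noteq> 0 \<and> \<not> int p dvd b \<and> q = of_int a / of_int b)"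

definition natural :: "xy ser \<Rightarrow> bool" where
  "natural Phi \<longleftrightarrow> Phi [] = 1 \<and>
     (\<forall>p w. prime p \<and> w \<noteq> [] \<longrightarrow> in_Zp p (Phi w * of_nat p ^ nat (bexp p (length w))))"

section \<open>Chord diagrams\<close>

text \<open>A (linear) Gauss word: every label occurs exactly twice. Its matching on
  the points 0..<2n (in the order of the oriented circle).\<close>
definition gauss_ok :: "'b list \<Rightarrow> bool" where
  "gauss_ok w \<longleftrightarrow> (\<forall>x\<in>set w. count_list w x = 2)"

definition gm :: "'b list \<Rightarrow> nat \<Rightarrow> nat" where
  "gm w i = (if i < length w then (THE j. j < length w \<and> j \<noteq> i \<and> w ! j = w ! i) else i)"

definition delta :: "'c \<Rightarrow> 'c \<Rightarrow> rat" where
  "delta f g = (if g = f then 1 else 0)"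

definition chord_basis :: "nat \<Rightarrow> (nat \<Rightarrow> nat) set" where
  "chord_basis n = {gm w | w :: nat list. gauss_ok w \<and> length w = 2 * n}"

definition ins_at :: "nat \<Rightarrow> 'b \<Rightarrow> 'b list \<Rightarrow> 'b list" where
  "ins_at k x w = take k w @ x # drop k w"

text \<open>Relations: rotation (diagrams live on a circle), one-term, four-term.\<close>
definition rot_rels :: "((nat \<Rightarrow> nat) \<Rightarrow> rat) set" where
  "rot_rels = {(\<lambda>g. delta (gm w) g - delta (gm (rotate1 w)) g) | w :: nat list. gauss_ok w}"

definition oneT_rels :: "((nat \<Rightarrow> nat) \<Rightarrow> rat) set" where
  "oneT_rels = {delta (gm w) | w :: nat list. gauss_ok w \<and> w \<noteq> [] \<and>
      ((\<exists>i. i + 1 < length w \<and> w ! i = w ! (i + 1)) \<or> hd w = last w)}"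

text \<open>w contains the fixed chord a twice and the free point N once; the new chord joins N
  to a point just before / just after each endpoint of a:
  G(p,+) - G(p,-) + G(q,+) - G(q,-) = 0.\<close>
definition fourT_rels :: "((nat \<Rightarrow> nat) \<Rightarrow> rat) set" where
  "fourT_rels = {(\<lambda>g. \<Sum>j<2. delta (gm (ins_at (filter (\<lambda>i. w ! i = a) [0..<length w] ! j + 1) N w)) g
                         - delta (gm (ins_at (filter (\<lambda>i. w ! i = a) [0..<length w] ! j) N w)) g)
      | w a N :: nat. a \<noteq> N \<and> count_list w N = 1 \<and> count_list w a = 2 \<and>
                      (\<forall>x\<in>set w. x \<noteq> N \<longrightarrow> count_list w x = 2)}"

definition chord_rels :: "((nat \<Rightarrow> nat) \<Rightarrow> rat) set" where
  "chord_rels = rot_rels \<union> oneT_rels \<union> fourT_rels"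

text \<open>An element of Chord(Q), given by its degree-n representatives V n in the free
  Q-space on chord diagrams, lies in Chord_nat = sum_n D(n)^-1 Chord_n(Z).\<close>
definition in_chord_nat :: "(nat \<Rightarrow> (nat \<Rightarrow> nat) \<Rightarrow> rat) \<Rightarrow> bool" where
  "in_chord_nat V \<longleftrightarrow> (\<forall>n. \<exists>z :: (nat \<Rightarrow> nat) \<Rightarrow> int.
      finite {f. z f \<noteq> 0} \<and> {f. z f \<noteq> 0} \<subseteq> chord_basis n \<and>
      (\<lambda>f. V n f - of_int (z f) / of_nat (Dn n)) \<in> qspan chord_rels)"

section \<open>Knot diagrams decomposed into elementary pieces\<close>

text \<open>Pieces act on the strand positions 0,1,... of a horizontal level, read top to bottom:
  a maximum creating strands i,i+1; a minimum joining strands i,i+1; a positive (True) or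
  negative (False) crossing of strands i,i+1; a re-bracketing c (True) or c^-1 (False)
  on strands i,i+1,i+2.\<close>
datatype piece = PMax nat | PMin nat | PCross bool nat | PAssoc bool nat

fun wch :: "piece \<Rightarrow> nat \<Rightarrow> nat" where
  "wch (PMax i) n = n + 2"
| "wch (PMin i) n = n - 2"
| "wch (PCross s i) n = n"
| "wch (PAssoc s i) n = n"

fun piece_ok :: "piece \<Rightarrow> nat \<Rightarrow> bool" where
  "piece_ok (PMax i) n = (i \<le> n)"
| "piece_ok (PMin i) n = (i + 2 \<le> n)"
| "piece_ok (PCross s i) n = (i + 2 \<le> n)"
| "piece_ok (PAssoc s i) n = (i + 3 \<le> n)"

text \<open>number of strands at level k (level k lies just above piece k)\<close>
definition width :: "piece list \<Rightarrow> nat \<Rightarrow> nat" where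
  "width K k = fold wch (take k K) 0"

definition swp :: "nat \<Rightarrow> nat \<Rightarrow> nat" where
  "swp i p = (if p = i then i + 1 else if p = i + 1 then i else p)"

text \<open>Traversal states (k, p, d): at position p of level k, moving down (d = True,
  through piece k) or up (d = False, through piece k-1).\<close>
fun nxt :: "piece list \<Rightarrow> nat \<times> nat \<times> bool \<Rightarrow> nat \<times> nat \<times> bool" where
  "nxt K (k, p, True) = (case K ! k of
      PMax i \<Rightarrow> (Suc k, if p < i then p else p + 2, True)
    | PMin i \<Rightarrow> (if p < i then (Suc k, p, True) else if i + 2 \<le> p then (Suc k, p - 2, True)
                else if p = i then (k, i + 1, False) else (k, i, False))
    | PCross s i \<Rightarrow> (Suc k, swp i p, True)
    | PAssoc s i \<Rightarrow> (Suc k, p, True))"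
| "nxt K (k, q, False) = (case K ! (k - 1) of
      PMax i \<Rightarrow> (if q < i then (k - 1, q, False) else if i + 2 \<le> q then (k - 1, q - 2, False)
                else if q = i then (k, i + 1, True) else (k, i, True))
    | PMin i \<Rightarrow> (k - 1, if q < i then q else q + 2, False)
    | PCross s i \<Rightarrow> (k - 1, swp i q, False)
    | PAssoc s i \<Rightarrow> (k - 1, q, False))"

definition on_strand :: "nat \<Rightarrow> nat \<times> nat \<Rightarrow> bool" where
  "on_strand p c \<longleftrightarrow> p = fst c \<or> p = snd c"

text \<open>Chord endpoints met while traversing a piece: chord m of piece k is labelled (k,m);
  the flag records that the strand is traversed upwards (reversed orientation).
  The chords of a piece are listed top to bottom; crossing chords sit just above the crossing.\<close>
fun ends :: "piece list \<Rightarrow> (nat \<times> nat) list list \<Rightarrow> nat \<times> nat \<times> bool \<Rightarrow> ((nat \<times> nat) \<times> bool) list" where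
  "ends K ws (k, p, True) = (case K ! k of
      PCross s i \<Rightarrow> [((k, m), False). m \<leftarrow> [0..<length (ws ! k)], on_strand p (ws ! k ! m)]
    | PAssoc s i \<Rightarrow> [((k, m), False). m \<leftarrow> [0..<length (ws ! k)], on_strand p (ws ! k ! m)]
    | _ \<Rightarrow> [])"
| "ends K ws (k, q, False) = (case K ! (k - 1) of
      PCross s i \<Rightarrow> rev [((k - 1, m), True). m \<leftarrow> [0..<length (ws ! (k - 1))], on_strand (swp i q) (ws ! (k - 1) ! m)]
    | PAssoc s i \<Rightarrow> rev [((k - 1, m), True). m \<leftarrow> [0..<length (ws ! (k - 1))], on_strand q (ws ! (k - 1) ! m)]
    | _ \<Rightarrow> [])"

text \<open>orientation ori: start going down the left (ori) or right (\<not> ori) leg of the first maximum\<close>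
definition start :: "bool \<Rightarrow> nat \<times> nat \<times> bool" where
  "start ori = (1, if ori then 0 else 1, True)"

definition npts :: "piece list \<Rightarrow> nat" where
  "npts K = (\<Sum>k\<le>length K. width K k)"

definition path :: "piece list \<Rightarrow> bool \<Rightarrow> nat \<Rightarrow> nat \<times> nat \<times> bool" where
  "path K ori t = (nxt K ^^ t) (start ori)"

text \<open>a decomposed knot diagram: valid pieces, from the empty level to the empty level,
  and the closed curve has a single component\<close>
definition knot_diagram :: "piece list \<Rightarrow> bool" where
  "knot_diagram K \<longleftrightarrow> K \<noteq> [] \<and>
     (\<forall>k<length K. piece_ok (K ! k) (width K k)) \<and> width K (length K) = 0 \<and>
     path K True (npts K) = start True \<and>
     inj_on (\<lambda>t. (fst (path K True t), fst (snd (path K True t)))) {..<npts K}"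

definition gauss :: "piece list \<Rightarrow> bool \<Rightarrow> (nat \<times> nat) list list \<Rightarrow> ((nat \<times> nat) \<times> bool) list" where
  "gauss K ori ws = concat (map (\<lambda>t. ends K ws (path K ori t)) [0..<npts K])"

text \<open>decoration of a piece, as a series in the horizontal chords (i,j), i<j, of its level\<close>
fun dec :: "xy ser \<Rightarrow> piece \<Rightarrow> (nat \<times> nat) ser" where
  "dec Phi (PMax i) = ser_one"
| "dec Phi (PMin i) = ser_one"
| "dec Phi (PCross s i) = ser_exp (ser_scale (if s then 1/2 else -1/2) (ser_letter (i, i + 1)))"
| "dec Phi (PAssoc s i) = (if s then subst Phi (ser_letter (i, i + 1)) (ser_letter (i + 1, i + 2))
                           else ser_inv (subst Phi (ser_letter (i, i + 1)) (ser_letter (i + 1, i + 2))))"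

definition choices :: "piece list \<Rightarrow> nat \<Rightarrow> (nat \<times> nat) list list set" where
  "choices K n = {ws. length ws = length K \<and>
      (\<forall>k<length K. set (ws ! k) \<subseteq> {(a, b). a < b \<and> b < width K k}) \<and>
      sum_list (map length ws) = n}"

text \<open>degree-n part of I_Phi(K), as a combination of chord diagrams\<close>
definition IPhi :: "xy ser \<Rightarrow> piece list \<Rightarrow> bool \<Rightarrow> nat \<Rightarrow> (nat \<Rightarrow> nat) \<Rightarrow> rat" where
  "IPhi Phi K ori n f = (\<Sum>ws\<in>choices K n.
      (\<Prod>k<length K. dec Phi (K ! k) (ws ! k)) *
      (-1) ^ length (filter snd (gauss K ori ws)) *
      delta (gm (map fst (gauss K ori ws))) f)"

end

theory Submission
  imports Defs "HOL-Library.Nat_Bijection"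
begin


lemma in_Zp_int: assumes "prime p" shows "in_Zp p (of_int z)"
  unfolding in_Zp_def
  by (rule exI[of _ z], rule exI[of _ 1]) (use assms in \<open>auto simp: prime_gt_1_nat\<close>)

lemma in_Zp_add: assumes "prime p" "in_Zp p x" "in_Zp p y" shows "in_Zp p (x + y)"
proof -
  obtain a b where ab: "b \<noteq> 0" "\<not> int p dvd b" "x = of_int a / of_int b" using assms(2) unfolding in_Zp_def by blast
  obtain c d where cd: "d \<noteq> 0" "\<not> int p dvd d" "y = of_int c / of_int d" using assms(3) unfolding in_Zp_def by blast
  have pr: "prime (int p)" using assms(1) by simp
  have "\<not> int p dvd b * d" using ab cd pr by (simp add: prime_dvd_mult_iff)
  moreover have "x + y = of_int (a*d + c*b) / of_int (b*d)" using ab cd by (simp add: field_simps)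
  ultimately show ?thesis unfolding in_Zp_def using ab cd by (intro exI[of _ "a*d+c*b"] exI[of _ "b*d"]) auto
qed

lemma in_Zp_mult: assumes "prime p" "in_Zp p x" "in_Zp p y" shows "in_Zp p (x * y)"
proof -
  obtain a b where ab: "b \<noteq> 0" "\<not> int p dvd b" "x = of_int a / of_int b" using assms(2) unfolding in_Zp_def by blast
  obtain c d where cd: "d \<noteq> 0" "\<not> int p dvd d" "y = of_int c / of_int d" using assms(3) unfolding in_Zp_def by blast
  have pr: "prime (int p)" using assms(1) by simp
  have "\<not> int p dvd b * d" using ab cd pr by (simp add: prime_dvd_mult_iff)
  moreover have "x * y = of_int (a*c) / of_int (b*d)" using ab cd by (simp add: field_simps)
  ultimately show ?thesis unfolding in_Zp_def using ab cd by (intro exI[of _ "a*c"] exI[of _ "b*d"]) auto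
qed

lemma in_Zp_unit: assumes "prime p" "b \<noteq> 0" "\<not> int p dvd b" shows "in_Zp p (1 / of_int b)"
  unfolding in_Zp_def using assms by (intro exI[of _ 1] exI[of _ b]) auto

lemma in_Zp_sum: assumes "prime p" "\<And>i. i \<in> A \<Longrightarrow> in_Zp p (f i)" shows "in_Zp p (\<Sum>i\<in>A. f i)"
  using assms(2)
proof (induction A rule: infinite_finite_induct)
  case (infinite A) then show ?case using in_Zp_int[OF assms(1), of 0] by simp
next
  case empty then show ?case using in_Zp_int[OF assms(1), of 0] by simp
next
  case (insert x F) then show ?case by (simp add: in_Zp_add assms(1))
qed

lemma in_Zp_all_int: assumes "\<And>p. prime p \<Longrightarrow> in_Zp p q" shows "q \<in> \<int>"
proof -
  obtain a b where q: "quotient_of q = (a, b)" by (cases "quotient_of q")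
  have b0: "b > 0" and cop: "coprime a b" and qe: "q = of_int a / of_int b"
    using quotient_of_denom_pos[OF q] quotient_of_coprime[OF q] quotient_of_div[OF q] by auto
  show ?thesis
  proof (cases "b = 1")
    case True then show ?thesis using qe by simp
  next
    case False
    then have "b \<noteq> 1" .
    have "nat b \<noteq> 1" using False b0 by auto
    then obtain p where p: "prime p" "p dvd nat b" using prime_factor_nat by blast
    have pb: "int p dvd b" proof - have "int p dvd int (nat b)" using p(2) by (simp only: int_dvd_int_iff) then show ?thesis using b0 by simp qed
    obtain c d where cd: "d \<noteq> 0" "\<not> int p dvd d" "q = of_int c / of_int d" using assms[OF p(1)] unfolding in_Zp_def by blast
    have "of_int a / of_int b = (of_int c / of_int d :: rat)" using qe cd by simp
    then have "a * d = c * b" using b0 cd(1) by (simp add: field_simps) (metis of_int_eq_iff of_int_mult)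
    then have "int p dvd a * d" using pb by (metis dvd_mult)
    then have "int p dvd a" using cd(2) p(1) by (simp add: prime_dvd_mult_iff)
    then have "int p dvd 1" using pb cop by (meson coprime_common_divisor)
    then show ?thesis using p(1) by (simp add: prime_gt_1_nat)
  qed
qed




definition Bp :: "nat \<Rightarrow> nat \<Rightarrow> nat" where "Bp p n = nat (bexp p n)"

definition good :: "nat \<Rightarrow> nat \<Rightarrow> rat \<Rightarrow> bool" where
  "good p n q \<longleftrightarrow> in_Zp p (q * of_nat p ^ Bp p n)"

lemma bexp_mono: assumes "prime p" "m \<le> n" shows "bexp p m \<le> bexp p n"
proof -
  have p1: "(of_nat p :: rat) - 1 > 0" using prime_gt_1_nat[OF assms(1)] by simp
  have "of_nat p * of_nat m / (of_nat p - 1)^2 \<le> (of_nat p * of_nat n / (of_nat p - 1)^2 :: rat)"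
    using assms(2) p1 by (intro divide_right_mono mult_left_mono) auto
  then show ?thesis unfolding bexp_def by (intro floor_mono) simp
qed

lemma bexp_superadd: assumes "prime p" shows "bexp p m + bexp p n \<le> bexp p (m + n)"
proof -
  have p1: "(of_nat p :: rat) - 1 > 0" using prime_gt_1_nat[OF assms(1)] by simp
  let ?x = "of_nat p * of_nat m / (of_nat p - 1)^2 - 1 / (of_nat p - 1) :: rat"
  let ?y = "of_nat p * of_nat n / (of_nat p - 1)^2 - 1 / (of_nat p - 1) :: rat"
  let ?z = "of_nat p * of_nat (m+n) / (of_nat p - 1)^2 - 1 / (of_nat p - 1) :: rat"
  define c where "c = 1 / (of_nat p - 1 :: rat)"
  define d where "d = of_nat p / (of_nat p - 1 :: rat)^2"
  have c0: "c \<ge> 0" using p1 unfolding c_def by simp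
  have "?x = d * of_nat m - c" "?y = d * of_nat n - c" "?z = d * (of_nat m + of_nat n) - c"
    unfolding c_def d_def by (simp_all add: field_simps)
  then have "?x + ?y \<le> ?z" using c0 by (simp add: algebra_simps)
  then have "\<lfloor>?x\<rfloor> + \<lfloor>?y\<rfloor> \<le> \<lfloor>?z\<rfloor>" using le_floor_add[of ?x ?y] floor_mono by (meson order_trans)
  then show ?thesis unfolding bexp_def .
qed

lemma Bp_superadd: assumes "prime p" shows "Bp p m + Bp p n \<le> Bp p (m + n)"
  using bexp_superadd[OF assms, of m n] bexp_mono[OF assms, of m "m+n"] bexp_mono[OF assms, of n "m+n"]
  unfolding Bp_def by linarith

lemma Bp_0: assumes "prime p" shows "Bp p 0 = 0"
proof -
  have p1: "(of_nat p :: rat) - 1 > 0" using prime_gt_1_nat[OF assms(1)] by simp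
  have "1 / (of_nat p - 1) > (0::rat)" using p1 by simp
  moreover have "(of_nat p * of_nat 0 / (of_nat p - 1)^2 - 1 / (of_nat p - 1) :: rat) = - (1 / (of_nat p - 1))" by simp
  ultimately have "(of_nat p * of_nat 0 / (of_nat p - 1)^2 - 1 / (of_nat p - 1) :: rat) < of_int 1" by linarith
  then have "bexp p 0 < 1" unfolding bexp_def by (simp only: floor_less_iff)
  then show ?thesis unfolding Bp_def by simp
qed

lemma in_Zp_pow_mono: assumes "prime p" "in_Zp p (q * of_nat p ^ a)" "a \<le> b" shows "in_Zp p (q * of_nat p ^ b)"
proof -
  have "of_nat p ^ b = (of_nat p ^ a * of_nat p ^ (b - a) :: rat)" using assms(3) by (simp add: power_add[symmetric])
  then have eq: "q * of_nat p ^ b = (q * of_nat p ^ a) * of_int (int p ^ (b - a))" by simp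
  show ?thesis unfolding eq by (rule in_Zp_mult[OF assms(1) assms(2) in_Zp_int[OF assms(1)]])
qed

lemma good_mult: assumes "prime p" "good p a x" "good p b y" shows "good p (a + b) (x * y)"
proof -
  have "in_Zp p ((x * of_nat p ^ Bp p a) * (y * of_nat p ^ Bp p b))"
    using in_Zp_mult assms unfolding good_def by blast
  then have "in_Zp p ((x * y) * of_nat p ^ (Bp p a + Bp p b))" by (simp add: power_add algebra_simps)
  then show ?thesis unfolding good_def using in_Zp_pow_mono[OF assms(1) _ Bp_superadd[OF assms(1)]] by blast
qed

lemma good_add: assumes "prime p" "good p n x" "good p n y" shows "good p n (x + y)"
  using in_Zp_add[OF assms(1)] assms unfolding good_def by (simp add: distrib_right)

lemma good_int: assumes "prime p" shows "good p n (of_int z)"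
  unfolding good_def using in_Zp_int[OF assms, of "z * int p ^ Bp p n"] by simp

lemma good_0: assumes "prime p" shows "good p n 0"
  using good_int[OF assms, of n 0] by simp

lemma good_1: assumes "prime p" shows "good p 0 1"
  using good_int[OF assms, of 0 1] by simp

lemma good_sum: assumes "prime p" "\<And>i. i \<in> A \<Longrightarrow> good p n (f i)" shows "good p n (\<Sum>i\<in>A. f i)"
  using assms(2)
proof (induction A rule: infinite_finite_induct)
  case (insert x F) then show ?case by (simp add: good_add assms(1))
qed (auto simp: good_0 assms(1))

lemma good_prod: assumes "prime p" "finite A" "\<And>i. i \<in> A \<Longrightarrow> good p (d i) (f i)"
  shows "good p (\<Sum>i\<in>A. d i) (\<Prod>i\<in>A. f i)"
  using assms(2,3)
proof (induction A rule: finite_induct)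
  case (insert x F) then show ?case by (simp add: good_mult assms(1))
qed (simp add: good_1 assms(1))

lemma good_neg_pow: assumes "prime p" "good p n x" shows "good p n ((-1)^k * x)"
proof -
  have "(-1::rat)^k = of_int ((-1)^k)" by simp
  then show ?thesis using good_mult[OF assms(1) good_int[OF assms(1), of 0 "(-1)^k"] assms(2)] by simp
qed

lemma good_neg: assumes "prime p" "good p n x" shows "good p n (- x)"
  using good_neg_pow[OF assms, of 1] by simp




lemma fact_decomp: assumes "prime p"
  shows "\<exists>u. fact n = p ^ (n div p) * fact (n div p) * u \<and> \<not> p dvd u"
proof (induction n)
  case 0 then show ?case using assms by (intro exI[of _ 1]) (auto simp: prime_gt_1_nat)
next
  case (Suc n)
  then obtain u where u: "fact n = p ^ (n div p) * fact (n div p) * u" "\<not> p dvd u" by blast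
  have p1: "p > 1" using assms prime_gt_1_nat by blast
  show ?case
  proof (cases "p dvd Suc n")
    case True
    then obtain m where m: "Suc n = p * m" by blast
    have "Suc n div p = m" using m p1 by simp
    moreover have "n div p = m - 1"
    proof (rule div_nat_eqI)
      have "m \<ge> 1" using m by (cases m) auto
      then show "p * (m - 1) \<le> n" "n < p * Suc (m - 1)" using m p1 by (simp_all add: algebra_simps diff_mult_distrib2)
    qed
    moreover obtain k where k: "m = Suc k" using m by (cases m) auto
    ultimately have dk: "Suc n div p = Suc k" "n div p = k" by auto
    have "fact (Suc n) = Suc n * fact n" by simp
    also have "\<dots> = p * Suc k * (p ^ k * fact k * u)" using m u(1) dk k by simp
    also have "\<dots> = (p * p ^ k) * (Suc k * fact k) * u" by (simp add: algebra_simps)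
    also have "\<dots> = p ^ (Suc n div p) * fact (Suc n div p) * u" using dk by simp
    finally have "fact (Suc n) = p ^ (Suc n div p) * fact (Suc n div p) * u" .
    then show ?thesis using u(2) by blast
  next
    case False
    have "Suc n mod p \<noteq> 0" using False by (simp add: dvd_eq_mod_eq_0)
    then have "Suc n div p = n div p" by (simp add: div_Suc)
    then have "fact (Suc n) = p ^ (Suc n div p) * fact (Suc n div p) * (Suc n * u)"
      using u(1) by (simp add: algebra_simps)
    moreover have "\<not> p dvd Suc n * u" using False u(2) prime_dvd_mult_iff[OF assms] by blast
    ultimately show ?thesis by blast
  qed
qed

lemma fact_Zp: assumes "prime p" shows "in_Zp p (of_nat p ^ ((n - 1) div (p - 1)) / fact n)"
proof (induction n rule: less_induct)
  case (less n)
  have p1: "p > 1" using assms prime_gt_1_nat by blast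
  obtain u where u: "fact n = p ^ (n div p) * fact (n div p) * u" "\<not> p dvd u" using fact_decomp[OF assms] by blast
  have u0: "u \<noteq> 0" using u(2) by (metis dvd_0_right)
  have iu: "in_Zp p (1 / of_int (int u))" using in_Zp_unit[OF assms, of "int u"] u u0 by (simp add: int_dvd_int_iff)
  define m where "m = n div p"
  define e where "e = (n - 1) div (p - 1)"
  show ?case
  proof (cases "m = 0")
    case True
    then have "fact n = u" using u(1) unfolding m_def by simp
    then have "(fact n :: rat) = of_nat u" by (metis of_nat_fact)
    then have "of_nat p ^ e / fact n = of_int (int p ^ e) * (1 / of_int (int u) :: rat)" by simp
    then have eq: "of_nat p ^ e / fact n = of_int (int p ^ e) * (1 / of_int (int u) :: rat)" .
    show ?thesis unfolding e_def[symmetric] eq by (rule in_Zp_mult[OF assms in_Zp_int[OF assms] iu])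
  next
    case False
    have "n > 0" using False unfolding m_def by (metis div_0 gr0I)
    then have mn: "m < n" using p1 unfolding m_def by (simp add: div_less_dividend)
    have IH: "in_Zp p (of_nat p ^ ((m - 1) div (p - 1)) / fact m)" using less mn by blast
    have "p * m \<le> n" unfolding m_def by simp
    moreover have "(p - 1) * m + (m - 1) = p * m - 1" using False p1 by (simp add: diff_mult_distrib)
    ultimately have "(p - 1) * m + (m - 1) \<le> n - 1" by linarith
    then have "((p - 1) * m + (m - 1)) div (p - 1) \<le> e" unfolding e_def by (rule div_le_mono)
    moreover have "((p - 1) * m + (m - 1)) div (p - 1) = m + (m - 1) div (p - 1)" using p1 by simp
    ultimately have ee: "m + (m - 1) div (p - 1) \<le> e" by simp
    have fe: "fact n = (of_nat p ^ m * fact m * of_nat u :: rat)"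
    proof -
      have "(fact n :: rat) = of_nat (fact n)" by simp
      also have "\<dots> = of_nat (p ^ m * fact m * u)" using u(1) unfolding m_def by simp
      finally show ?thesis by simp
    qed
    have eq: "(of_nat p ^ e / fact n :: rat) =
      (of_nat p ^ ((m - 1) div (p - 1)) / fact m) * (1 / of_int (int u)) * of_int (int p ^ (e - m - (m - 1) div (p - 1)))"
    proof -
      have "e = m + (m - 1) div (p - 1) + (e - m - (m - 1) div (p - 1))" using ee by simp
      then have "(of_nat p ^ e :: rat) = of_nat p ^ m * of_nat p ^ ((m - 1) div (p - 1)) * of_nat p ^ (e - m - (m - 1) div (p - 1))"
        by (simp only: power_add[symmetric])
      moreover have "(of_nat u :: rat) \<noteq> 0" "(fact m :: rat) \<noteq> 0" "(of_nat p :: rat) ^ m \<noteq> 0" using u0 p1 by auto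
      ultimately show ?thesis unfolding fe using p1 by (simp add: field_simps)
    qed
    show ?thesis unfolding e_def[symmetric] eq by (rule in_Zp_mult[OF assms in_Zp_mult[OF assms IH iu] in_Zp_int[OF assms]])
  qed
qed




lemma bexp_lower: assumes "prime p" "k \<ge> 1" shows "int ((k - 1) div (p - 1)) \<le> bexp p k"
proof -
  have p1: "p > 1" using assms prime_gt_1_nat by blast
  have pq: "(of_nat p :: rat) - 1 > 0" using p1 by simp
  have "(p - 1) * ((k - 1) div (p - 1)) \<le> k - 1" by simp
  then have "(of_nat (p - 1) :: rat) * of_nat ((k - 1) div (p - 1)) \<le> of_nat (k - 1)"
    by (metis of_nat_le_iff of_nat_mult)
  then have h1: "(of_nat p - 1) * of_nat ((k - 1) div (p - 1)) \<le> (of_nat k - 1 :: rat)"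
    using p1 assms(2) by (simp add: of_nat_diff)
  have h2: "(of_nat k - 1) * (of_nat p - 1) \<le> (of_nat p * of_nat k - (of_nat p - 1) :: rat)"
    using assms(2) by (simp add: algebra_simps)
  have "of_nat ((k - 1) div (p - 1)) \<le> (of_nat k - 1) / (of_nat p - 1 :: rat)"
    using h1 pq by (simp add: field_simps)
  also have "\<dots> = ((of_nat k - 1) * (of_nat p - 1)) / (of_nat p - 1)^2"
    using pq by (simp add: power2_eq_square)
  also have "\<dots> \<le> (of_nat p * of_nat k - (of_nat p - 1)) / (of_nat p - 1)^2"
    using h2 by (rule divide_right_mono) simp
  also have "\<dots> = of_nat p * of_nat k / (of_nat p - 1)^2 - (of_nat p - 1) / (of_nat p - 1)^2"
    by (rule diff_divide_distrib)
  also have "(of_nat p - 1) / (of_nat p - 1)^2 = 1 / (of_nat p - 1 :: rat)" using pq by (simp add: power2_eq_square)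
  finally have "of_int (int ((k - 1) div (p - 1))) \<le> (of_nat p * of_nat k / (of_nat p - 1)^2 - 1 / (of_nat p - 1) :: rat)"
    by simp
  then show ?thesis unfolding bexp_def by (simp only: le_floor_iff)
qed

lemma half_fact_good: assumes "prime p" shows "good p k (1 / (2^k * fact k))"
proof (cases "k = 0")
  case True then show ?thesis using good_1[OF assms] by simp
next
  case False
  then have k1: "k \<ge> 1" by simp
  show ?thesis
  proof (cases "p = 2")
    case True
    have "(of_nat 2 * of_nat k / (of_nat 2 - 1)^2 - 1 / (of_nat 2 - 1) :: rat) = of_int (2 * int k - 1)" by simp
    then have "bexp 2 k = 2 * int k - 1" unfolding bexp_def by (simp only: floor_of_int)
    then have B: "Bp 2 k = (k - 1) + k" unfolding Bp_def using k1 by simp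
    have "(1 / (2^k * fact k)) * (of_nat 2 :: rat) ^ Bp 2 k = of_nat 2 ^ ((k - 1) div (2 - 1)) / fact k"
      unfolding B by (simp add: power_add)
    then show ?thesis unfolding good_def True using fact_Zp[OF assms[unfolded True], of k] by simp
  next
    case False
    define e where "e = (k - 1) div (p - 1)"
    have eB: "e \<le> Bp p k" using bexp_lower[OF assms k1] unfolding Bp_def e_def by simp
    have "Bp p k = e + (Bp p k - e)" using eB by simp
    then have pw: "(of_nat p :: rat) ^ Bp p k = of_nat p ^ e * of_nat p ^ (Bp p k - e)" by (metis power_add)
    have eq: "(1 / (2^k * fact k)) * (of_nat p :: rat) ^ Bp p k =
        (of_nat p ^ e / fact k) * (1 / of_int (2^k)) * of_int (int p ^ (Bp p k - e))"
      unfolding pw by simp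
    have nd: "\<not> int p dvd 2 ^ k"
    proof
      assume "int p dvd 2 ^ k"
      moreover have "prime (int p)" using assms by simp
      ultimately have "int p dvd 2" using prime_dvd_power by blast
      then have "p dvd 2" by presburger
      then have "p = 1 \<or> p = 2" using two_is_prime_nat unfolding prime_nat_iff by blast
      then show False using False assms prime_gt_1_nat by auto
    qed
    show ?thesis unfolding good_def eq
      by (rule in_Zp_mult[OF assms in_Zp_mult[OF assms _ in_Zp_unit[OF assms _ nd]] in_Zp_int[OF assms]])
         (use fact_Zp[OF assms, of k] e_def in auto)
  qed
qed




definition natser :: "nat \<Rightarrow> 'a ser \<Rightarrow> bool" where
  "natser p F \<longleftrightarrow> (\<forall>w. good p (length w) (F w))"

lemma mult_letter:
  "ser_mult (ser_scale c (ser_letter a)) G w = (if w \<noteq> [] \<and> hd w = a then c * G (tl w) else 0)"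
proof -
  have "ser_mult (ser_scale c (ser_letter a)) G w =
      (\<Sum>j\<le>length w. (if j = 1 then (if w \<noteq> [] \<and> hd w = a then c * G (tl w) else 0) else 0))"
    unfolding ser_mult_def
  proof (rule sum.cong[OF refl])
    fix j assume j: "j \<in> {..length w}"
    show "ser_scale c (ser_letter a) (take j w) * G (drop j w) =
        (if j = 1 then (if w \<noteq> [] \<and> hd w = a then c * G (tl w) else 0) else 0)"
    proof (cases "j = 1")
      case True then show ?thesis
        by (cases w) (auto simp: ser_scale_def ser_letter_def drop_Suc)
    next
      case False
      have "take j w \<noteq> [a]"
      proof
        assume h: "take j w = [a]"
        then have "length (take j w) = 1" by simp
        then have "j = 1" using j by simp
        then show False using False by simp
      qed
      then show ?thesis using False by (simp add: ser_scale_def ser_letter_def)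
    qed
  qed
  also have "\<dots> = (if 1 \<in> {..length w} then (if w \<noteq> [] \<and> hd w = a then c * G (tl w) else 0) else 0)"
    by (rule sum.delta[OF finite_atMost])
  also have "\<dots> = (if w \<noteq> [] \<and> hd w = a then c * G (tl w) else 0)"
    by (cases w) auto
  finally show ?thesis .
qed

lemma letter_scale: "ser_letter a = ser_scale 1 (ser_letter a)"
  by (rule ext) (simp add: ser_scale_def)

lemma prod_replicate:
  "ser_prod (replicate k (ser_scale c (ser_letter a))) w = (if w = replicate k a then c ^ k else 0)"
proof (induction k arbitrary: w)
  case 0 then show ?case by (simp add: ser_prod_def ser_one_def)
next
  case (Suc k)
  have "ser_prod (replicate (Suc k) (ser_scale c (ser_letter a))) w =
      ser_mult (ser_scale c (ser_letter a)) (ser_prod (replicate k (ser_scale c (ser_letter a)))) w"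
    by (simp add: ser_prod_def)
  also have "\<dots> = (if w = replicate (Suc k) a then c ^ Suc k else 0)"
    unfolding mult_letter Suc by (cases w) auto
  finally show ?case .
qed

lemma prod_letters: "ser_prod (map ser_letter xs) w = (if w = xs then 1 else 0)"
proof (induction xs arbitrary: w)
  case Nil then show ?case by (simp add: ser_prod_def ser_one_def)
next
  case (Cons a xs)
  have "ser_prod (map ser_letter (a # xs)) w = ser_mult (ser_scale 1 (ser_letter a)) (ser_prod (map ser_letter xs)) w"
    by (simp add: ser_prod_def letter_scale[symmetric])
  also have "\<dots> = (if w = a # xs then 1 else 0)"
    unfolding mult_letter Cons by (cases w) auto
  finally show ?case .
qed

lemma exp_val: "ser_exp (ser_scale c (ser_letter a)) w =
    (if w = replicate (length w) a then c ^ length w / fact (length w) else 0)"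
proof -
  have "ser_exp (ser_scale c (ser_letter a)) w =
     (\<Sum>k\<le>length w. (if k = length w then (if w = replicate (length w) a then c ^ length w / fact (length w) else 0) else 0))"
    unfolding ser_exp_def prod_replicate by (rule sum.cong) auto
  also have "\<dots> = (if w = replicate (length w) a then c ^ length w / fact (length w) else 0)"
    by (simp add: sum.delta)
  finally show ?thesis .
qed

lemma natser_exp: assumes "prime p" "c = 1/2 \<or> c = -1/2"
  shows "natser p (ser_exp (ser_scale c (ser_letter a)))"
  unfolding natser_def
proof
  fix w :: "'a list"
  let ?n = "length w"
  obtain sg :: rat where sg: "sg = 1 \<or> sg = -1" "c = sg / 2" using assms(2) by (metis minus_divide_left)
  have eq: "c ^ ?n / fact ?n = sg ^ ?n * (1 / (2 ^ ?n * fact ?n))" unfolding sg(2) power_divide by simp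
  have "good p ?n (sg ^ ?n * (1 / (2 ^ ?n * fact ?n)))"
    using sg(1) half_fact_good[OF assms(1)] good_neg_pow[OF assms(1) half_fact_good[OF assms(1)]] by auto
  then have "good p ?n (c ^ ?n / fact ?n)" unfolding eq .
  then show "good p ?n (ser_exp (ser_scale c (ser_letter a)) w)"
    unfolding exp_val using good_0[OF assms(1)] by simp
qed

definition hmap :: "'a \<Rightarrow> 'a \<Rightarrow> xy \<Rightarrow> 'a" where
  "hmap a b c = (case c of X \<Rightarrow> a | Y \<Rightarrow> b)"

lemma subst_letters: "subst Phi (ser_letter a) (ser_letter b) w =
    (\<Sum>u\<in>{u::xy list. length u \<le> length w}. Phi u * (if w = map (hmap a b) u then 1 else 0))"
proof -
  have m: "map (case_xy (ser_letter a) (ser_letter b)) u = map ser_letter (map (hmap a b) u)" for u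
    by (induction u) (auto simp: hmap_def split: xy.splits)
  show ?thesis unfolding subst_def by (simp only: m prod_letters)
qed

lemma natural_nil: "natural Phi \<Longrightarrow> Phi [] = 1" unfolding natural_def by simp

lemma natser_subst: assumes "prime p" "natural Phi"
  shows "natser p (subst Phi (ser_letter a) (ser_letter b))"
  unfolding natser_def subst_letters
proof (intro allI good_sum[OF assms(1)])
  fix w :: "'a list" and u :: "xy list"
  show "good p (length w) (Phi u * (if w = map (hmap a b) u then 1 else 0))"
  proof (cases "w = map (hmap a b) u")
    case True
    then have lw: "length w = length u" by simp
    have "good p (length u) (Phi u)"
    proof (cases "u = []")
      case True then show ?thesis using natural_nil[OF assms(2)] good_1[OF assms(1)] by simp
    next
      case False then show ?thesis using assms unfolding natural_def good_def Bp_def by blast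
    qed
    then show ?thesis using True lw by simp
  qed (simp add: good_0[OF assms(1)])
qed

lemma subst_nil: assumes "natural Phi" shows "subst Phi (ser_letter a) (ser_letter b) [] = 1"
proof -
  have "{u::xy list. length u \<le> 0} = {[]}" by auto
  then show ?thesis unfolding subst_letters using natural_nil[OF assms] by simp
qed

function sinv :: "'a ser \<Rightarrow> 'a list \<Rightarrow> rat" where
  "sinv F w = (if w = [] then 1 else - (\<Sum>k\<in>{1..length w}. F (take k w) * sinv F (drop k w)))"
  by auto
termination by (relation "measure (\<lambda>(F, w). length w)") auto

declare sinv.simps[simp del]

lemma mult_sinv: assumes "F [] = 1" shows "ser_mult F (sinv F) = ser_one"
proof
  fix w :: "'a list"
  have split: "{..length w} = insert 0 {1..length w}" by auto
  show "ser_mult F (sinv F) w = ser_one w"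
  proof (cases "w = []")
    case True then show ?thesis by (simp add: ser_mult_def ser_one_def assms sinv.simps)
  next
    case False
    have "ser_mult F (sinv F) w = F [] * sinv F w + (\<Sum>k\<in>{1..length w}. F (take k w) * sinv F (drop k w))"
      unfolding ser_mult_def split by simp
    also have "\<dots> = 0" using False assms by (subst sinv.simps) simp
    finally show ?thesis using False by (simp add: ser_one_def)
  qed
qed

lemma right_inv_unique: assumes "F [] = 1" "ser_mult F G = ser_one" "ser_mult F H = ser_one"
  shows "G = H"
proof
  fix w show "G w = H w"
  proof (induction w rule: length_induct)
    case (1 w)
    have split: "{..length w} = insert 0 {1..length w}" by auto
    have eq: "(\<Sum>k\<in>{1..length w}. F (take k w) * G (drop k w)) = (\<Sum>k\<in>{1..length w}. F (take k w) * H (drop k w))"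
    proof (rule sum.cong[OF refl])
      fix k assume "k \<in> {1..length w}"
      then have "length (drop k w) < length w" by auto
      then show "F (take k w) * G (drop k w) = F (take k w) * H (drop k w)" using 1 by simp
    qed
    have "F [] * G w + (\<Sum>k\<in>{1..length w}. F (take k w) * G (drop k w)) = ser_one w"
      using fun_cong[OF assms(2), of w] unfolding ser_mult_def split by simp
    moreover have "F [] * H w + (\<Sum>k\<in>{1..length w}. F (take k w) * H (drop k w)) = ser_one w"
      using fun_cong[OF assms(3), of w] unfolding ser_mult_def split by simp
    ultimately show ?case using eq assms(1) by simp
  qed
qed

lemma ser_inv_eq: assumes "F [] = 1" shows "ser_inv F = sinv F"
  unfolding ser_inv_def
proof (rule the_equality)
  show "ser_mult F (sinv F) = ser_one" by (rule mult_sinv[of F, OF assms])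
next
  fix G assume "ser_mult F G = ser_one"
  then show "G = sinv F" by (rule right_inv_unique[OF assms _ mult_sinv[of F, OF assms]])
qed

lemma natser_sinv: assumes "prime p" "natser p F" shows "natser p (sinv F)"
  unfolding natser_def
proof
  fix w show "good p (length w) (sinv F w)"
  proof (induction w rule: length_induct)
    case (1 w)
    show ?case
    proof (cases "w = []")
      case True then show ?thesis using good_1[OF assms(1)] by (simp add: sinv.simps)
    next
      case False
      have "good p (length w) (\<Sum>k\<in>{1..length w}. F (take k w) * sinv F (drop k w))"
      proof (rule good_sum[OF assms(1)])
        fix k assume k: "k \<in> {1..length w}"
        then have "length (drop k w) < length w" by auto
        then have g2: "good p (length (drop k w)) (sinv F (drop k w))" by (rule 1[rule_format])
        have g1: "good p (length (take k w)) (F (take k w))" using assms(2) unfolding natser_def by blast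
        have "length (take k w) + length (drop k w) = length w" using k by simp
        then show "good p (length w) (F (take k w) * sinv F (drop k w))"
          using good_mult[OF assms(1) g1 g2] by simp
      qed
      then show ?thesis using False good_neg[OF assms(1)] by (subst sinv.simps) simp
    qed
  qed
qed

lemma natser_one: "prime p \<Longrightarrow> natser p ser_one"
  unfolding natser_def ser_one_def using good_0 good_1 by auto

lemma natser_dec: assumes "prime p" "natural Phi" shows "natser p (dec Phi pc)"
proof (cases pc)
  case (PMax x1) then show ?thesis using natser_one[OF assms(1)] by simp
next
  case (PMin x2) then show ?thesis using natser_one[OF assms(1)] by simp
next
  case (PCross s i) then show ?thesis using natser_exp[OF assms(1), of "1/2"] natser_exp[OF assms(1), of "-1/2"] by (cases s) auto
next
  case (PAssoc s i)
  have ns: "natser p (subst Phi (ser_letter (i, i + 1)) (ser_letter (i + 1, i + 2)))"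
    using natser_subst[OF assms] .
  show ?thesis
  proof (cases s)
    case True then show ?thesis using PAssoc ns by simp
  next
    case False then show ?thesis using PAssoc ns natser_sinv[OF assms(1) ns]
      ser_inv_eq[of "subst Phi (ser_letter (i, i + 1)) (ser_letter (i + 1, i + 2))", OF subst_nil[OF assms(2)]] by simp
  qed
qed




definition valid :: "piece list \<Rightarrow> nat \<times> nat \<times> bool \<Rightarrow> bool" where
  "valid K s \<longleftrightarrow> fst s \<le> length K \<and> fst (snd s) < width K (fst s)"

definition flip :: "nat \<times> nat \<times> bool \<Rightarrow> nat \<times> nat \<times> bool" where
  "flip s = (fst s, fst (snd s), \<not> snd (snd s))"

lemma flip_simp[simp]: "flip (k, p, d) = (k, p, \<not> d)" by (simp add: flip_def)
lemma flip_flip[simp]: "flip (flip s) = s" by (simp add: flip_def)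

lemma width_0[simp]: "width K 0 = 0" by (simp add: width_def)

lemma width_Suc: "k < length K \<Longrightarrow> width K (Suc k) = wch (K ! k) (width K k)"
  by (simp add: width_def take_Suc_conv_app_nth)

lemma kd_ok: "knot_diagram K \<Longrightarrow> k < length K \<Longrightarrow> piece_ok (K ! k) (width K k)"
  unfolding knot_diagram_def by blast

lemma kd_end: "knot_diagram K \<Longrightarrow> width K (length K) = 0"
  unfolding knot_diagram_def by blast

lemma kd_ne: "knot_diagram K \<Longrightarrow> 0 < length K"
  unfolding knot_diagram_def by simp

lemma K0: assumes "knot_diagram K" shows "K ! 0 = PMax 0"
proof -
  have "piece_ok (K ! 0) 0" using kd_ok[OF assms kd_ne[OF assms]] by simp
  then show ?thesis by (cases "K ! 0") auto
qed

lemma valid_True: assumes "knot_diagram K" "valid K (k, p, True)" shows "k < length K"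
  using assms kd_end[OF assms(1)] unfolding valid_def by (cases "k = length K") auto

lemma valid_lt: assumes "knot_diagram K" "valid K (k, p, d)" shows "k < length K \<or> (d = False \<and> k = length K)"
  using assms kd_end[OF assms(1)] unfolding valid_def by (cases "k = length K") auto

lemma valid_pos: assumes "valid K (k, p, d)" shows "k > 0"
  using assms unfolding valid_def by (cases k) auto

lemma swp_lt: "i + 2 \<le> n \<Longrightarrow> p < n \<Longrightarrow> swp i p < n" by (simp add: swp_def)
lemma swp_swp[simp]: "swp i (swp i p) = p" by (simp add: swp_def)

lemma nxt_valid: assumes "knot_diagram K" "valid K s" shows "valid K (nxt K s)"
proof -
  obtain k p d where s: "s = (k, p, d)" by (cases s) auto
  show ?thesis
  proof (cases d)
    case True
    then have dT: "d = True" by simp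
    have k: "k < length K" using valid_True assms s dT by blast
    have ok: "piece_ok (K ! k) (width K k)" using kd_ok[OF assms(1) k] .
    have ws: "width K (Suc k) = wch (K ! k) (width K k)" using width_Suc[OF k] .
    have p: "p < width K k" using assms(2) s unfolding valid_def by simp
    show ?thesis using ok ws p k unfolding s dT valid_def
      by (cases "K ! k") (auto simp: swp_def)
  next
    case False
    then have dF: "d = False" by simp
    obtain j where j: "k = Suc j" using valid_pos[of K k p d] assms(2) s by (cases k) auto
    have k: "k \<le> length K" using assms(2) s unfolding valid_def by simp
    then have jl: "j < length K" using j by simp
    have ok: "piece_ok (K ! j) (width K j)" using kd_ok[OF assms(1) jl] .
    have ws: "width K (Suc j) = wch (K ! j) (width K j)" using width_Suc[OF jl] .
    have p: "p < width K k" using assms(2) s unfolding valid_def by simp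
    show ?thesis using ok ws p k unfolding s dF j valid_def
      by (cases "K ! j") (auto simp: swp_def)
  qed
qed

lemma nxt_flip: assumes "knot_diagram K" "valid K s" shows "nxt K (flip (nxt K s)) = flip s"
proof -
  obtain k p d where s: "s = (k, p, d)" by (cases s) auto
  show ?thesis
  proof (cases d)
    case True
    then have dT: "d = True" by simp
    show ?thesis unfolding s dT
      by (cases "K ! k") (auto simp: swp_def)
  next
    case False
    then have dF: "d = False" by simp
    obtain j where j: "k = Suc j" using valid_pos[of K k p d] assms(2) s by (cases k) auto
    show ?thesis unfolding s dF j
      by (cases "K ! j") (auto simp: swp_def)
  qed
qed

lemma nxt_inj: assumes "knot_diagram K" "valid K s1" "valid K s2" "nxt K s1 = nxt K s2" shows "s1 = s2"
  using nxt_flip[OF assms(1,2)] nxt_flip[OF assms(1,3)] assms(4) by (metis flip_flip)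




lemma path_Suc: "path K ori (Suc t) = nxt K (path K ori t)" by (simp add: path_def)
lemma path_0: "path K ori 0 = start ori" by (simp add: path_def)

lemma width_1: assumes "knot_diagram K" shows "width K 1 = 2"
  using width_Suc[OF kd_ne[OF assms]] K0[OF assms] by simp

lemma start_valid: assumes "knot_diagram K" shows "valid K (start True)"
  using width_1[OF assms] kd_ne[OF assms] unfolding valid_def start_def by (simp add: Suc_le_eq)

lemma path_valid: assumes "knot_diagram K" shows "valid K (path K True t)"
  by (induction t) (auto simp: path_Suc path_0 start_valid[OF assms] nxt_valid[OF assms])

definition Vs :: "piece list \<Rightarrow> (nat \<times> nat) set" where
  "Vs K = {(l, q). l \<le> length K \<and> q < width K l}"

lemma Vs_Sigma: "Vs K = Sigma {..length K} (\<lambda>l. {..<width K l})"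
  unfolding Vs_def by auto

lemma finite_Vs: "finite (Vs K)" unfolding Vs_Sigma by auto

lemma card_Vs: "card (Vs K) = npts K" unfolding Vs_Sigma npts_def by simp

lemma npts_pos: assumes "knot_diagram K" shows "npts K > 0"
proof -
  have "width K 1 \<le> npts K" unfolding npts_def
    by (rule member_le_sum) (use kd_ne[OF assms] in \<open>auto simp: Suc_le_eq\<close>)
  then show ?thesis using width_1[OF assms] by simp
qed

definition hpos :: "piece list \<Rightarrow> nat \<Rightarrow> nat \<times> nat" where
  "hpos K t = (fst (path K True t), fst (snd (path K True t)))"

lemma hpos_inj: "knot_diagram K \<Longrightarrow> inj_on (hpos K) {..<npts K}"
  unfolding knot_diagram_def hpos_def by blast

lemma hpos_img: assumes "knot_diagram K" shows "hpos K ` {..<npts K} = Vs K"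
proof (rule card_subset_eq[OF finite_Vs])
  show "hpos K ` {..<npts K} \<subseteq> Vs K"
    using path_valid[OF assms] unfolding hpos_def Vs_def valid_def by auto
  show "card (hpos K ` {..<npts K}) = card (Vs K)"
    using card_image[OF hpos_inj[OF assms]] card_Vs by simp
qed

lemma path_inj: assumes "knot_diagram K" shows "inj_on (path K True) {..<npts K}"
  using hpos_inj[OF assms] unfolding inj_on_def hpos_def by auto

definition PT :: "piece list \<Rightarrow> (nat \<times> nat \<times> bool) set" where
  "PT K = path K True ` {..<npts K}"

lemma PT_valid: "knot_diagram K \<Longrightarrow> s \<in> PT K \<Longrightarrow> valid K s"
  unfolding PT_def using path_valid by auto

lemma F1a: assumes "knot_diagram K" "l \<le> length K" "q < width K l" shows "\<exists>d. (l, q, d) \<in> PT K"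
proof -
  have "(l, q) \<in> hpos K ` {..<npts K}" using assms hpos_img[OF assms(1)] unfolding Vs_def by auto
  then obtain t where t: "t < npts K" "hpos K t = (l, q)" by auto
  then show ?thesis unfolding PT_def hpos_def
    by (intro exI[of _ "snd (snd (path K True t))"]) (auto intro!: image_eqI[of _ _ t] simp: prod_eq_iff)
qed

lemma F1b: assumes "knot_diagram K" "(l, q, d1) \<in> PT K" "(l, q, d2) \<in> PT K" shows "d1 = d2"
proof -
  obtain t1 where t1: "t1 < npts K" "path K True t1 = (l, q, d1)" using assms(2) unfolding PT_def by auto
  obtain t2 where t2: "t2 < npts K" "path K True t2 = (l, q, d2)" using assms(3) unfolding PT_def by auto
  have "hpos K t1 = hpos K t2" using t1 t2 unfolding hpos_def by simp
  then have "t1 = t2" using hpos_inj[OF assms(1)] t1 t2 unfolding inj_on_def by auto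
  then show ?thesis using t1 t2 by simp
qed

lemma path_N: "knot_diagram K \<Longrightarrow> path K True (npts K) = start True"
  unfolding knot_diagram_def by blast

lemma F2: assumes "knot_diagram K" "s \<in> PT K" shows "nxt K s \<in> PT K"
proof -
  obtain t where t: "t < npts K" "s = path K True t" using assms(2) unfolding PT_def by auto
  show ?thesis
  proof (cases "Suc t < npts K")
    case True then show ?thesis using t unfolding PT_def by (auto simp: path_Suc[symmetric])
  next
    case False
    then have "Suc t = npts K" using t by simp
    then have "nxt K s = path K True 0" using t path_N[OF assms(1)] by (simp add: path_Suc[symmetric] path_0)
    then show ?thesis using npts_pos[OF assms(1)] unfolding PT_def by auto
  qed
qed

lemma F3: assumes "knot_diagram K" "s \<in> PT K" shows "\<exists>s'\<in>PT K. nxt K s' = s"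
proof -
  obtain t where t: "t < npts K" "s = path K True t" using assms(2) unfolding PT_def by auto
  show ?thesis
  proof (cases t)
    case 0
    obtain M where M: "npts K = Suc M" using npts_pos[OF assms(1)] by (cases "npts K") auto
    have "nxt K (path K True M) = s" using t 0 path_N[OF assms(1)] M by (simp add: path_Suc[symmetric] path_0)
    then show ?thesis using M unfolding PT_def by auto
  next
    case (Suc t')
    then show ?thesis using t unfolding PT_def by (auto simp: path_Suc intro!: bexI[of _ "path K True t'"])
  qed
qed

definition isCA :: "piece \<Rightarrow> bool" where
  "isCA pc = (case pc of PCross s i \<Rightarrow> True | PAssoc s i \<Rightarrow> True | _ \<Rightarrow> False)"

definition sig :: "piece \<Rightarrow> nat \<Rightarrow> nat" where
  "sig pc a = (case pc of PCross s i \<Rightarrow> swp i a | _ \<Rightarrow> a)"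

lemma sig_sig[simp]: "sig pc (sig pc a) = a" by (cases pc) (auto simp: sig_def)

lemma nxt_down: "isCA (K ! k) \<Longrightarrow> nxt K (k, a, True) = (Suc k, sig (K ! k) a, True)"
  by (cases "K ! k") (auto simp: isCA_def sig_def)

lemma nxt_up: "isCA (K ! k) \<Longrightarrow> nxt K (Suc k, sig (K ! k) a, False) = (k, a, False)"
  by (cases "K ! k") (auto simp: isCA_def sig_def)

lemma pair: assumes "knot_diagram K" "isCA (K ! k)"
  shows "(k, a, d) \<in> PT K \<longleftrightarrow> (Suc k, sig (K ! k) a, d) \<in> PT K"
proof (cases d)
  case True
  then have dT: "d = True" by simp
  show ?thesis unfolding dT
  proof
    assume "(k, a, True) \<in> PT K"
    then show "(Suc k, sig (K ! k) a, True) \<in> PT K" using F2[OF assms(1)] nxt_down[OF assms(2)] by metis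
  next
    assume h: "(Suc k, sig (K ! k) a, True) \<in> PT K"
    obtain s' where s': "s' \<in> PT K" "nxt K s' = (Suc k, sig (K ! k) a, True)" using F3[OF assms(1) h] by blast
    have "flip s' = nxt K (flip (nxt K s'))" using nxt_flip[OF assms(1) PT_valid[OF assms(1) s'(1)]] by simp
    also have "\<dots> = (k, a, False)" using s'(2) nxt_up[OF assms(2)] by simp
    finally have "s' = (k, a, True)" by (metis flip_flip flip_simp)
    then show "(k, a, True) \<in> PT K" using s' by simp
  qed
next
  case False
  then have dF: "d = False" by simp
  show ?thesis unfolding dF
  proof
    assume h: "(k, a, False) \<in> PT K"
    obtain s' where s': "s' \<in> PT K" "nxt K s' = (k, a, False)" using F3[OF assms(1) h] by blast
    have "flip s' = nxt K (flip (nxt K s'))" using nxt_flip[OF assms(1) PT_valid[OF assms(1) s'(1)]] by simp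
    also have "\<dots> = (Suc k, sig (K ! k) a, True)" using s'(2) nxt_down[OF assms(2)] by simp
    finally have "s' = (Suc k, sig (K ! k) a, False)" by (metis flip_flip flip_simp)
    then show "(Suc k, sig (K ! k) a, False) \<in> PT K" using s' by simp
  next
    assume "(Suc k, sig (K ! k) a, False) \<in> PT K"
    then show "(k, a, False) \<in> PT K" using F2[OF assms(1)] nxt_up[OF assms(2)] by metis
  qed
qed

lemma path_False: assumes "knot_diagram K" "t < npts K"
  shows "path K False t = flip (path K True (npts K - Suc t))"
  using assms(2)
proof (induction t)
  case 0
  obtain M where M: "npts K = Suc M" using npts_pos[OF assms(1)] by (cases "npts K") auto
  let ?s = "path K True M"
  have ns: "nxt K ?s = (1, 0, True)" using path_N[OF assms(1)] M by (simp add: path_Suc[symmetric] start_def)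
  have "flip ?s = nxt K (flip (nxt K ?s))" using nxt_flip[OF assms(1) path_valid[OF assms(1)]] by simp
  also have "\<dots> = (1, 1, True)" unfolding ns using K0[OF assms(1)] by simp
  finally show ?case using M by (simp add: path_0 start_def)
next
  case (Suc t)
  obtain j where j: "npts K - Suc t = Suc j" using Suc.prems by (cases "npts K - Suc t") auto
  have j2: "npts K - Suc (Suc t) = j" using j by simp
  have "path K False (Suc t) = nxt K (flip (path K True (Suc j)))" using Suc j by (simp add: path_Suc)
  also have "\<dots> = flip (path K True j)"
    unfolding path_Suc by (rule nxt_flip[OF assms(1) path_valid[OF assms(1)]])
  finally show ?case using j2 by simp
qed




definition cnt :: "piece list \<Rightarrow> (nat \<times> nat) list list \<Rightarrow> nat \<times> nat \<Rightarrow> nat \<times> nat \<times> bool \<Rightarrow> nat" where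
  "cnt K ws x s = count_list (map fst (ends K ws s)) x"

lemma comp_count: "count_list (map fst [((k', m'), b). m' \<leftarrow> [0..<L], P m']) (k, m) =
    (if k' = k \<and> m < L \<and> P m then 1 else 0)"
  by (induction L) auto

lemma cnt_T: "cnt K ws (k, m) (k', p, True) =
   (if k' = k \<and> isCA (K ! k) \<and> m < length (ws ! k) \<and> on_strand p (ws ! k ! m) then 1 else 0)"
  unfolding cnt_def by (cases "K ! k'") (auto simp: comp_count isCA_def)

lemma cnt_F: "cnt K ws (k, m) (Suc k', q, False) =
   (if k' = k \<and> isCA (K ! k) \<and> m < length (ws ! k) \<and> on_strand (sig (K ! k) q) (ws ! k ! m) then 1 else 0)"
  unfolding cnt_def by (cases "K ! k'") (auto simp: comp_count isCA_def sig_def rev_map[symmetric])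

lemma valid_flip[simp]: "valid K (flip s) = valid K s" by (simp add: valid_def flip_def)

lemma count_gauss_sum: "count_list (map fst (gauss K ori ws)) x = (\<Sum>t\<in>{0..<npts K}. cnt K ws x (path K ori t))"
proof -
  have "count_list (map fst (gauss K ori ws)) x = sum_list (map (\<lambda>t. cnt K ws x (path K ori t)) [0..<npts K])"
    unfolding gauss_def map_concat count_list_concat cnt_def by (simp add: comp_def)
  also have "\<dots> = (\<Sum>t\<in>{0..<npts K}. cnt K ws x (path K ori t))"
    by (simp add: sum_set_upt_conv_sum_list_nat[symmetric])
  finally show ?thesis .
qed

definition gg :: "bool \<Rightarrow> nat \<times> nat \<times> bool \<Rightarrow> nat \<times> nat \<times> bool" where
  "gg ori = (if ori then id else flip)"

lemma gg_gg[simp]: "gg ori (gg ori s) = s" by (simp add: gg_def)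

lemma sum_path: assumes "knot_diagram K"
  shows "(\<Sum>t\<in>{0..<npts K}. h (path K ori t)) = (\<Sum>s\<in>PT K. h (gg ori s))"
proof -
  have inj: "inj_on (path K True) {0..<npts K}" using path_inj[OF assms] by (simp add: lessThan_atLeast0)
  have PT: "PT K = path K True ` {0..<npts K}" unfolding PT_def by (simp add: lessThan_atLeast0)
  have R: "(\<Sum>s\<in>PT K. h (gg ori s)) = (\<Sum>t\<in>{0..<npts K}. h (gg ori (path K True t)))"
    unfolding PT by (simp add: sum.reindex[OF inj])
  show ?thesis
  proof (cases ori)
    case True then show ?thesis unfolding R by (simp add: gg_def)
  next
    case False
    have "(\<Sum>t\<in>{0..<npts K}. h (path K ori t)) = (\<Sum>t\<in>{0..<npts K}. h (flip (path K True (npts K - Suc t))))"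
      using False path_False[OF assms] by (intro sum.cong) auto
    also have "\<dots> = (\<Sum>t\<in>{0..<npts K}. h (flip (path K True t)))"
      using sum.atLeastLessThan_rev[of "\<lambda>t. h (flip (path K True t))" 0 "npts K"] by simp
    finally show ?thesis unfolding R using False by (simp add: gg_def)
  qed
qed

lemma ind_sum: assumes "finite A"
  shows "(\<Sum>s\<in>A. (if gg ori s = Z0 then 1 else 0 :: nat)) = (if gg ori Z0 \<in> A then 1 else 0)"
proof -
  have "(\<Sum>s\<in>A. (if gg ori s = Z0 then 1 else 0 :: nat)) = (\<Sum>s\<in>A. (if s = gg ori Z0 then 1 else 0))"
  proof (rule sum.cong[OF refl])
    fix s show "(if gg ori s = Z0 then 1 else 0 :: nat) = (if s = gg ori Z0 then 1 else 0)"
      by (metis gg_gg)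
  qed
  then show ?thesis using sum.delta[OF assms, of "gg ori Z0" "\<lambda>_. 1::nat"] by simp
qed

lemma one_of: assumes "knot_diagram K" "l \<le> length K" "q < width K l"
  shows "(if (l, q, True) \<in> PT K then 1 else 0) + (if (l, q, False) \<in> PT K then 1 else (0::nat)) = 1"
proof -
  obtain d where d: "(l, q, d) \<in> PT K" using F1a[OF assms] by blast
  have "\<not> ((l, q, True) \<in> PT K \<and> (l, q, False) \<in> PT K)" using F1b[OF assms(1)] by blast
  then show ?thesis using d by (cases d) auto
qed

lemma finite_PT: "finite (PT K)" unfolding PT_def by simp

lemma count_gauss: assumes K: "knot_diagram K" and k: "k < length K" and ca: "isCA (K ! k)"
  and m: "m < length (ws ! k)" and ab: "ws ! k ! m = (a, b)" "a < b" "b < width K k"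
  shows "count_list (map fst (gauss K ori ws)) (k, m) = 2"
proof -
  let ?X1 = "(k, a, True)" and ?X2 = "(k, b, True)"
  let ?X3 = "(Suc k, sig (K ! k) a, False)" and ?X4 = "(Suc k, sig (K ! k) b, False)"
  let ?I = "\<lambda>X s. (if gg ori s = X then 1 else 0 :: nat)"
  have dec: "cnt K ws (k, m) (gg ori s) = ?I ?X1 s + ?I ?X2 s + ?I ?X3 s + ?I ?X4 s" if s: "s \<in> PT K" for s
  proof -
    have v: "valid K (gg ori s)" using PT_valid[OF K s] by (simp add: gg_def)
    obtain k' p d where e: "gg ori s = (k', p, d)" by (cases "gg ori s") auto
    show ?thesis
    proof (cases d)
      case True
      then show ?thesis unfolding e using cnt_T[of K ws k m k' p] ca m ab by (auto simp: on_strand_def)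
    next
      case False
      obtain j where j: "k' = Suc j" using valid_pos[of K k' p d] v e by (cases k') auto
      have sa: "sig (K ! k) p = a \<longleftrightarrow> p = sig (K ! k) a" "sig (K ! k) p = b \<longleftrightarrow> p = sig (K ! k) b"
        by (metis sig_sig)+
      have "sig (K ! k) a \<noteq> sig (K ! k) b" using ab(2) by (metis sig_sig less_irrefl)
      then show ?thesis unfolding e j using False cnt_F[of K ws k m j p] ca m ab sa by (auto simp: on_strand_def)
    qed
  qed
  have "count_list (map fst (gauss K ori ws)) (k, m) = (\<Sum>s\<in>PT K. cnt K ws (k, m) (gg ori s))"
    unfolding count_gauss_sum sum_path[OF K] ..
  also have "\<dots> = (\<Sum>s\<in>PT K. ?I ?X1 s) + (\<Sum>s\<in>PT K. ?I ?X2 s) + (\<Sum>s\<in>PT K. ?I ?X3 s) + (\<Sum>s\<in>PT K. ?I ?X4 s)"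
    by (simp add: sum.distrib dec cong: sum.cong)
  also have "\<dots> = (if gg ori ?X1 \<in> PT K then 1 else 0) + (if gg ori ?X2 \<in> PT K then 1 else 0)
      + (if gg ori ?X3 \<in> PT K then 1 else 0) + (if gg ori ?X4 \<in> PT K then 1 else 0)"
    by (simp only: ind_sum[OF finite_PT])
  also have "\<dots> = 2"
  proof -
    have ka: "k \<le> length K" "a < width K k" "b < width K k" using k ab by auto
    have pa: "(Suc k, sig (K ! k) a, d) \<in> PT K \<longleftrightarrow> (k, a, d) \<in> PT K" for d using pair[OF K ca] by blast
    have pb: "(Suc k, sig (K ! k) b, d) \<in> PT K \<longleftrightarrow> (k, b, d) \<in> PT K" for d using pair[OF K ca] by blast
    show ?thesis using one_of[OF K ka(1,2)] one_of[OF K ka(1,3)] pa pb by (cases ori) (simp_all add: gg_def)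
  qed
  finally show ?thesis .
qed




definition Lab :: "piece list \<Rightarrow> (nat \<times> nat) list list \<Rightarrow> (nat \<times> nat) set" where
  "Lab K ws = {(k, m). k < length K \<and> isCA (K ! k) \<and> m < length (ws ! k)}"

lemma Lab_Sigma: "Lab K ws = Sigma {k. k < length K \<and> isCA (K ! k)} (\<lambda>k. {..<length (ws ! k)})"
  unfolding Lab_def by auto

lemma finite_Lab: "finite (Lab K ws)" unfolding Lab_Sigma by auto

lemma path_valid_any: assumes "knot_diagram K" "t < npts K" shows "valid K (path K ori t)"
proof (cases ori)
  case True then show ?thesis using path_valid[OF assms(1)] by simp
next
  case False then show ?thesis using path_False[OF assms] path_valid[OF assms(1)] by simp
qed

lemma gauss_labels: assumes K: "knot_diagram K" and x: "x \<in> set (map fst (gauss K ori ws))"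
  shows "x \<in> Lab K ws"
proof -
  obtain k m where xe: "x = (k, m)" by (cases x) auto
  have "count_list (map fst (gauss K ori ws)) x \<noteq> 0" using x by (simp add: count_list_0_iff)
  then have "(\<Sum>t\<in>{0..<npts K}. cnt K ws x (path K ori t)) \<noteq> 0" unfolding count_gauss_sum .
  then obtain t where t: "t \<in> {0..<npts K}" "cnt K ws x (path K ori t) \<noteq> 0" by (meson sum.neutral)
  have v: "valid K (path K ori t)" using path_valid_any[OF K] t(1) by simp
  obtain k' p d where e: "path K ori t = (k', p, d)" by (cases "path K ori t") auto
  show ?thesis
  proof (cases d)
    case True
    then have "valid K (k', p, True)" using v e by simp
    then have "k' < length K" using valid_True[OF K] by blast
    then show ?thesis using t(2) True unfolding e xe Lab_def by (simp add: cnt_T split: if_splits)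
  next
    case False
    obtain j where j: "k' = Suc j" using valid_pos[of K k' p d] v e by (cases k') auto
    have "Suc j \<le> length K" using v e j unfolding valid_def by simp
    then show ?thesis using t(2) False unfolding e xe j Lab_def by (simp add: cnt_F split: if_splits)
  qed
qed

lemma gm_map_inj: assumes "inj f" shows "gm (map f w) = gm w"
proof
  fix i
  show "gm (map f w) i = gm w i"
  proof (cases "i < length w")
    case True
    have "(\<lambda>j. j < length (map f w) \<and> j \<noteq> i \<and> map f w ! j = map f w ! i) =
          (\<lambda>j. j < length w \<and> j \<noteq> i \<and> w ! j = w ! i)"
    proof
      fix j show "(j < length (map f w) \<and> j \<noteq> i \<and> map f w ! j = map f w ! i) =
          (j < length w \<and> j \<noteq> i \<and> w ! j = w ! i)"
        using True assms by (auto simp: inj_eq)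
    qed
    then show ?thesis unfolding gm_def using True by simp
  next
    case False then show ?thesis unfolding gm_def by simp
  qed
qed

lemma card_Lab: assumes "length ws = length K" "\<forall>k<length K. \<not> isCA (K ! k) \<longrightarrow> ws ! k = []"
  shows "card (Lab K ws) = sum_list (map length ws)"
proof -
  have "card (Lab K ws) = (\<Sum>k\<in>{k. k < length K \<and> isCA (K ! k)}. length (ws ! k))"
    unfolding Lab_Sigma by (subst card_SigmaI) auto
  also have "\<dots> = (\<Sum>k\<in>{k \<in> {0..<length K}. isCA (K ! k)}. length (ws ! k))"
    by (rule sum.cong) auto
  also have "\<dots> = (\<Sum>k\<in>{0..<length K}. if isCA (K ! k) then length (ws ! k) else 0)"
    by (rule sum.inter_filter) simp
  also have "\<dots> = (\<Sum>k\<in>{0..<length K}. length (ws ! k))"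
    using assms(2) by (intro sum.cong) auto
  also have "\<dots> = sum_list (map length ws)"
    using assms(1) by (simp add: sum_list_sum_nth)
  finally show ?thesis .
qed

lemma gauss_basis: assumes K: "knot_diagram K" and ws: "ws \<in> choices K n"
  and nz: "\<forall>k<length K. \<not> isCA (K ! k) \<longrightarrow> ws ! k = []"
  shows "gm (map fst (gauss K ori ws)) \<in> chord_basis n"
proof -
  let ?w = "map fst (gauss K ori ws)"
  have wsd: "length ws = length K" "\<And>k. k < length K \<Longrightarrow> set (ws ! k) \<subseteq> {(a, b). a < b \<and> b < width K k}"
    "sum_list (map length ws) = n"
    using ws unfolding choices_def by auto
  have c2: "count_list ?w x = 2" if x: "x \<in> Lab K ws" for x
  proof -
    obtain k m where xe: "x = (k, m)" and k: "k < length K" "isCA (K ! k)" "m < length (ws ! k)"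
      using x unfolding Lab_def by auto
    obtain a b where ab: "ws ! k ! m = (a, b)" by (cases "ws ! k ! m") auto
    have "ws ! k ! m \<in> set (ws ! k)" using k(3) by simp
    then have "a < b" "b < width K k" using wsd(2)[OF k(1)] ab by auto
    then show ?thesis unfolding xe using count_gauss[OF K k ab] by simp
  qed
  have sub: "set ?w \<subseteq> Lab K ws" using gauss_labels[OF K] by blast
  have "length ?w = (\<Sum>x\<in>Lab K ws. count_list ?w x)" using sum_count_set[OF sub finite_Lab] by simp
  also have "\<dots> = 2 * card (Lab K ws)" using c2 by simp
  also have "\<dots> = 2 * n" using card_Lab[OF wsd(1) nz] wsd(3) by simp
  finally have len: "length ?w = 2 * n" .
  let ?w' = "map prod_encode ?w"
  have inj: "inj prod_encode" by (rule inj_prod_encode)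
  have ok: "gauss_ok ?w'" unfolding gauss_ok_def
  proof
    fix y assume "y \<in> set ?w'"
    then obtain x where x: "x \<in> set ?w" "y = prod_encode x" by (simp only: set_map) blast
    show "count_list ?w' y = 2" unfolding x(2) count_list_map_conv[OF inj] using c2 sub x(1) by blast
  qed
  have "gm ?w' = gm ?w" by (rule gm_map_inj[OF inj])
  then show ?thesis unfolding chord_basis_def using ok len by (intro CollectI exI[of _ ?w']) auto
qed




lemma Bp_big: assumes "prime p" "n + 1 < p" shows "Bp p n = 0"
proof -
  have p1: "(of_nat p :: rat) - 1 > 0" using assms by simp
  have q: "(of_nat p :: rat) - 1 - of_nat n > 0" using assms by simp
  have pq: "(of_nat p :: rat) * (of_nat p - 1 - of_nat n) > 0" using q assms by (simp add: prime_gt_0_nat)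
  have eq: "(of_nat p - 1 :: rat)^2 - (of_nat p * of_nat n - (of_nat p - 1)) = of_nat p * (of_nat p - 1 - of_nat n)"
    by (simp add: power2_eq_square algebra_simps)
  have h: "of_nat p * of_nat n - (of_nat p - 1) < (of_nat p - 1 :: rat)^2"
    using eq pq by linarith
  have e1: "(of_nat p - 1) / (of_nat p - 1)^2 = 1 / (of_nat p - 1 :: rat)" using p1 by (simp add: power2_eq_square)
  have "(of_nat p * of_nat n / (of_nat p - 1)^2 - 1 / (of_nat p - 1) :: rat)
        = (of_nat p * of_nat n - (of_nat p - 1)) / (of_nat p - 1)^2"
    by (subst diff_divide_distrib, subst e1, rule refl)
  also have "\<dots> < of_int 1" using h p1 by simp
  finally have "bexp p n < 1" unfolding bexp_def by (simp only: floor_less_iff)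
  then show ?thesis unfolding Bp_def by simp
qed

lemma Dn_decomp: assumes "prime p" shows "\<exists>m. Dn n = p ^ Bp p n * m"
proof (cases "p \<le> n + 1")
  case True
  let ?S = "{p. prime p \<and> p \<le> n + 1}"
  have fin: "finite ?S" by (rule finite_subset[of _ "{..n+1}"]) auto
  have "p \<in> ?S" using True assms by simp
  then have "Dn n = p ^ nat (bexp p n) * (\<Prod>q\<in>?S - {p}. q ^ nat (bexp q n))"
    unfolding Dn_def by (rule prod.remove[OF fin])
  then show ?thesis unfolding Bp_def by blast
next
  case False then show ?thesis using Bp_big[OF assms] by simp
qed

lemma Dn_pos: "Dn n > 0"
  unfolding Dn_def by (rule prod_pos) (auto simp: prime_gt_0_nat)

lemma finite_choices: "finite (choices K n)"
proof -
  let ?A = "{..<npts K + 1} \<times> {..<npts K + 1}"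
  let ?L = "{xs. set xs \<subseteq> ?A \<and> length xs \<le> n}"
  have "choices K n \<subseteq> {ws. set ws \<subseteq> ?L \<and> length ws = length K}"
  proof
    fix ws assume ws: "ws \<in> choices K n"
    have d: "length ws = length K" "\<And>k. k < length K \<Longrightarrow> set (ws ! k) \<subseteq> {(a, b). a < b \<and> b < width K k}"
      "sum_list (map length ws) = n" using ws unfolding choices_def by auto
    have "set ws \<subseteq> ?L"
    proof
      fix xs assume "xs \<in> set ws"
      then obtain k where k: "k < length ws" "xs = ws ! k" by (auto simp: in_set_conv_nth)
      have "length xs \<le> n" using d(3) k member_le_sum_list[of "length xs" "map length ws"] by auto
      moreover have "width K k \<le> npts K" unfolding npts_def using k d(1) by (intro member_le_sum) auto
      then have "set xs \<subseteq> ?A"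
      proof -
        assume wn: "width K k \<le> npts K"
        have "set xs \<subseteq> {(a, b). a < b \<and> b < width K k}" using d(2)[of k] k d(1) by simp
        moreover have "{(a, b). a < b \<and> b < width K k} \<subseteq> ?A" using wn by auto
        ultimately show ?thesis by (rule subset_trans)
      qed
      ultimately show "xs \<in> ?L" by simp
    qed
    then show "ws \<in> {ws. set ws \<subseteq> ?L \<and> length ws = length K}" using d(1) by simp
  qed
  moreover have "finite ?L" by (rule finite_lists_length_le) simp
  then have "finite {ws. set ws \<subseteq> ?L \<and> length ws = length K}" by (rule finite_lists_length_eq)
  ultimately show ?thesis by (rule finite_subset)
qed

definition coef :: "xy ser \<Rightarrow> piece list \<Rightarrow> (nat \<times> nat) list list \<Rightarrow> rat" where
  "coef Phi K ws = (\<Prod>k<length K. dec Phi (K ! k) (ws ! k))"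




lemma coef_nz: assumes "coef Phi K ws \<noteq> 0" shows "\<forall>k<length K. \<not> isCA (K ! k) \<longrightarrow> ws ! k = []"
proof (intro allI impI)
  fix k assume k: "k < length K" "\<not> isCA (K ! k)"
  have "dec Phi (K ! k) (ws ! k) \<noteq> 0" using assms k(1) unfolding coef_def by (simp add: prod_zero_iff)
  then show "ws ! k = []"
  proof (cases "K ! k")
    case (PMax i) then show ?thesis using \<open>dec Phi (K ! k) (ws ! k) \<noteq> 0\<close> by (simp add: ser_one_def split: if_splits)
  next
    case (PMin i) then show ?thesis using \<open>dec Phi (K ! k) (ws ! k) \<noteq> 0\<close> by (simp add: ser_one_def split: if_splits)
  next
    case (PCross s i) then show ?thesis using k(2) by (simp add: isCA_def)
  next
    case (PAssoc s i) then show ?thesis using k(2) by (simp add: isCA_def)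
  qed
qed

lemma coef_good: assumes "prime p" "natural Phi" "ws \<in> choices K n" shows "good p n (coef Phi K ws)"
proof -
  have d: "length ws = length K" "sum_list (map length ws) = n" using assms(3) unfolding choices_def by auto
  have "(\<Sum>k<length K. length (ws ! k)) = n"
    using d by (simp add: sum_list_sum_nth lessThan_atLeast0)
  moreover have "good p (\<Sum>k<length K. length (ws ! k)) (coef Phi K ws)"
    unfolding coef_def using natser_dec[OF assms(1,2)] unfolding natser_def
    by (intro good_prod[OF assms(1)]) auto
  ultimately show ?thesis by simp
qed

lemma IPhi_eq: "IPhi Phi K ori n f = (\<Sum>ws\<in>choices K n. coef Phi K ws *
      (-1) ^ length (filter snd (gauss K ori ws)) * delta (gm (map fst (gauss K ori ws))) f)"
  unfolding IPhi_def coef_def ..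

lemma IPhi_good: assumes "prime p" "natural Phi" shows "good p n (IPhi Phi K ori n f)"
  unfolding IPhi_eq
proof (rule good_sum[OF assms(1)])
  fix ws assume ws: "ws \<in> choices K n"
  have g: "good p n ((-1) ^ length (filter snd (gauss K ori ws)) * coef Phi K ws)"
    by (rule good_neg_pow[OF assms(1) coef_good[OF assms ws]])
  have "coef Phi K ws * (-1) ^ length (filter snd (gauss K ori ws)) * delta (gm (map fst (gauss K ori ws))) f
     = (if f = gm (map fst (gauss K ori ws)) then (-1) ^ length (filter snd (gauss K ori ws)) * coef Phi K ws else 0)"
    by (simp add: delta_def)
  then show "good p n (coef Phi K ws * (-1) ^ length (filter snd (gauss K ori ws)) * delta (gm (map fst (gauss K ori ws))) f)"
    using g good_0[OF assms(1)] by simp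
qed

lemma IPhi_supp: assumes "knot_diagram K" "IPhi Phi K ori n f \<noteq> 0"
  shows "f \<in> chord_basis n \<and> f \<in> (\<lambda>ws. gm (map fst (gauss K ori ws))) ` choices K n"
proof -
  obtain ws where ws: "ws \<in> choices K n"
    "coef Phi K ws * (-1) ^ length (filter snd (gauss K ori ws)) * delta (gm (map fst (gauss K ori ws))) f \<noteq> 0"
    using assms(2) unfolding IPhi_eq by (rule sum.not_neutral_contains_not_neutral)
  have c: "coef Phi K ws \<noteq> 0" and f: "f = gm (map fst (gauss K ori ws))" using ws(2) unfolding delta_def
    by (auto split: if_splits)
  show ?thesis using gauss_basis[OF assms(1) ws(1) coef_nz[OF c]] f ws(1) by blast
qed

theorem mainTheorem9:
  fixes Phi :: "xy ser" and K :: "piece list" and ori :: bool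
  assumes "is_associator1 Phi"
    and "natural Phi"
    and "knot_diagram K"
  shows "in_chord_nat (IPhi Phi K ori)"
  unfolding in_chord_nat_def
proof
  fix n
  let ?V = "IPhi Phi K ori n"
  have D0: "(of_nat (Dn n) :: rat) \<noteq> 0" using Dn_pos[of n] by simp
  have int: "?V f * of_nat (Dn n) \<in> \<int>" for f
  proof (rule in_Zp_all_int)
    fix p :: nat assume p: "prime p"
    obtain m where m: "Dn n = p ^ Bp p n * m" using Dn_decomp[OF p] by blast
    have "in_Zp p ((?V f * of_nat p ^ Bp p n) * of_int (int m))"
      using in_Zp_mult[OF p _ in_Zp_int[OF p]] IPhi_good[OF p assms(2)] unfolding good_def by blast
    then show "in_Zp p (?V f * of_nat (Dn n))" unfolding m by (simp add: mult.assoc)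
  qed
  define z where "z f = \<lfloor>?V f * of_nat (Dn n)\<rfloor>" for f
  have zf: "of_int (z f) = ?V f * of_nat (Dn n)" for f
  proof -
    obtain r where r: "?V f * of_nat (Dn n) = of_int r" using int[of f] by (rule Ints_cases)
    show ?thesis unfolding z_def r by simp
  qed
  have sub: "{f. z f \<noteq> 0} \<subseteq> {f. ?V f \<noteq> 0}"
  proof
    fix f assume "f \<in> {f. z f \<noteq> 0}"
    then have "of_int (z f) \<noteq> (0::rat)" by simp
    then show "f \<in> {f. ?V f \<noteq> 0}" unfolding zf by simp
  qed
  have sub2: "{f. ?V f \<noteq> 0} \<subseteq> (\<lambda>ws. gm (map fst (gauss K ori ws))) ` choices K n"
  proof
    fix f assume "f \<in> {f. ?V f \<noteq> 0}"
    then show "f \<in> (\<lambda>ws. gm (map fst (gauss K ori ws))) ` choices K n" using IPhi_supp[OF assms(3)] by simp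
  qed
  have sub3: "{f. ?V f \<noteq> 0} \<subseteq> chord_basis n"
  proof
    fix f assume "f \<in> {f. ?V f \<noteq> 0}"
    then show "f \<in> chord_basis n" using IPhi_supp[OF assms(3)] by simp
  qed
  have fin: "finite {f. z f \<noteq> 0}"
    by (rule finite_subset[OF subset_trans[OF sub sub2] finite_imageI[OF finite_choices]])
  have zero: "(\<lambda>f. ?V f - of_int (z f) / of_nat (Dn n)) = (\<lambda>g. \<Sum>r\<in>{}. (\<lambda>_. 0) r * r g)"
  proof
    fix f show "?V f - of_int (z f) / of_nat (Dn n) = (\<Sum>r\<in>{}. (\<lambda>_. 0) r * r f)"
      unfolding zf using D0 by simp
  qed
  have "(\<lambda>f. ?V f - of_int (z f) / of_nat (Dn n)) \<in> qspan chord_rels"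
    unfolding qspan_def zero by (intro CollectI exI[of _ "{}"] exI[of _ "\<lambda>_. 0"]) simp
  then show "\<exists>z :: (nat \<Rightarrow> nat) \<Rightarrow> int. finite {f. z f \<noteq> 0} \<and> {f. z f \<noteq> 0} \<subseteq> chord_basis n \<and>
      (\<lambda>f. ?V f - of_int (z f) / of_nat (Dn n)) \<in> qspan chord_rels"
    using fin subset_trans[OF sub sub3] by blast
qed


end
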